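(* Let $S$ be a nearly simple monoid whose kernel contains a minimal idempotent. Then $S$ is completely regular.
   Context: The kernel of a semigroup is its unique minimal two-sided ideal. A monoid is nearly simple if it has a unique minimal two-sided ideal and that ideal contains all non-invertible elements. An idempotent $p$ ($pp=p$) is minimal if minimal for the order $p\le q\iff p=pq=qp$ on idempotents. A semigroup is completely regular if every element $a$ admits $x$ with $a=axa$ and $ax=xa$. Semigroups considered have no zero element. *)

theory Defs
  imports Main
begin

(* The monoid is the whole type 'a :: monoid_mult. *)

definition two_sided_ideal :: "'a::monoid_mult set \<Rightarrow> bool" where
  "two_sided_ideal I \<longleftrightarrow> I \<noteq> {} \<and> (\<forall>s i. i \<in> I \<longrightarrow> s * i \<in> I \<and> i * s \<in> I)"

definition minimal_ideal :: "'a::monoid_mult set \<Rightarrow> bool" where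
  "minimal_ideal I \<longleftrightarrow> two_sided_ideal I \<and>
     (\<forall>J. two_sided_ideal J \<and> J \<subseteq> I \<longrightarrow> J = I)"

definition is_kernel :: "'a::monoid_mult set \<Rightarrow> bool" where
  "is_kernel K \<longleftrightarrow> minimal_ideal K \<and> (\<forall>J. minimal_ideal J \<longrightarrow> J = K)"

definition invertible :: "'a::monoid_mult \<Rightarrow> bool" where
  "invertible a \<longleftrightarrow> (\<exists>b. a * b = 1 \<and> b * a = 1)"

definition nearly_simple :: "'a::monoid_mult itself \<Rightarrow> bool" where
  "nearly_simple _ \<longleftrightarrow> (\<exists>K::'a set. is_kernel K \<and> {a. \<not> invertible a} \<subseteq> K)"

definition idempotent :: "'a::monoid_mult \<Rightarrow> bool" where
  "idempotent p \<longleftrightarrow> p * p = p"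

definition idem_le :: "'a::monoid_mult \<Rightarrow> 'a \<Rightarrow> bool" where
  "idem_le p q \<longleftrightarrow> p = p * q \<and> p = q * p"

definition minimal_idempotent :: "'a::monoid_mult \<Rightarrow> bool" where
  "minimal_idempotent p \<longleftrightarrow> idempotent p \<and>
     (\<forall>q. idempotent q \<and> idem_le q p \<longrightarrow> q = p)"

definition has_zero :: "'a::monoid_mult itself \<Rightarrow> bool" where
  "has_zero _ \<longleftrightarrow> (\<exists>z::'a. \<forall>a. z * a = z \<and> a * z = z)"

definition completely_regular :: "'a::monoid_mult itself \<Rightarrow> bool" where
  "completely_regular _ \<longleftrightarrow> (\<forall>a::'a. \<exists>x. a = a * x * a \<and> a * x = x * a)"

end

theory Submission
  imports Defs
begin

lemma grp_lemma:
  fixes a x y :: "'a::monoid_mult"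
  assumes ax: "a = a * a * x" and ya: "a = y * a * a"
  shows "\<exists>g. a = a * g * a \<and> a * g = g * a"
proof -
  define e where "e = a * x"
  have yae: "y * a = e"
  proof -
    have "y * a = y * (a * a * x)" using ax by simp
    also have "\<dots> = (y * a * a) * x" by (simp add: mult.assoc)
    finally show ?thesis using ya e_def by simp
  qed
  have ee: "e * e = e"
  proof -
    have "e * e = y * a * (a * x)" using yae e_def by simp
    also have "\<dots> = y * (a * a * x)" by (simp add: mult.assoc)
    finally show ?thesis using ax yae by simp
  qed
  have ea: "e * a = a" using ya yae by (simp add: mult.assoc)
  have ae: "a * e = a" using ax e_def by (simp add: mult.assoc)
  define r where "r = e * x * e"
  define l where "l = e * y * e"
  have ar: "a * r = e" using r_def e_def ee ae by (metis mult.assoc)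
  have la: "l * a = e" using l_def yae ee ea by (metis mult.assoc)
  have "l = l * e" using l_def ee by (metis mult.assoc)
  also have "\<dots> = l * a * r" using ar by (simp add: mult.assoc)
  also have "\<dots> = e * r" using la by simp
  also have "\<dots> = r" using r_def ee by (metis mult.assoc)
  finally have lr: "l = r" .
  show ?thesis
    by (rule exI[of _ r]) (metis ar la lr ea)
qed

lemma ideal_gen:
  fixes K :: "'a::monoid_mult set"
  assumes "minimal_ideal K" "b \<in> K" "c \<in> K"
  shows "\<exists>u v. c = u * b * v"
proof -
  let ?J = "{u * b * v | u v. True}"
  have "two_sided_ideal ?J"
    unfolding two_sided_ideal_def
    apply (auto)
     apply (metis mult.assoc)
    by (metis mult.assoc)
  moreover have "?J \<subseteq> K"
    using assms unfolding minimal_ideal_def two_sided_ideal_def by auto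
  ultimately have "?J = K" using assms(1) unfolding minimal_ideal_def by blast
  thus ?thesis using assms(3) by auto
qed

lemma ideal_mem:
  fixes K :: "'a::monoid_mult set"
  assumes "minimal_ideal K" "b \<in> K"
  shows "u * b * v \<in> K"
  using assms unfolding minimal_ideal_def two_sided_ideal_def by auto

lemma group_inv:
  fixes K :: "'a::monoid_mult set"
  assumes mK: "minimal_ideal K" and pK: "p \<in> K" and mp: "minimal_idempotent p"
  shows "\<exists>c. c * (p * t * p) = p \<and> (p * t * p) * c = p"
proof -
  have pp: "p * p = p" using mp unfolding minimal_idempotent_def idempotent_def by simp
  define g where "g = p * t * p"
  have gK: "g \<in> K" using ideal_mem[OF mK pK, of "p * t" 1] g_def by simp
  have pg: "p * g = g" "g * p = g" using pp g_def by (metis mult.assoc)+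
  obtain u v where puv: "p = u * g * v" using ideal_gen[OF mK gK pK] by blast
  define u' where "u' = p * u * p"
  define v' where "v' = p * v * p"
  have pu: "p * u' = u'" "u' * p = u'" "p * v' = v'" "v' * p = v'"
    using pp u'_def v'_def by (metis mult.assoc)+
  have p3: "p = u' * g * v'"
  proof -
    have "p = p * p * p" using pp by simp
    also have "\<dots> = p * u * (p * g * p) * v * p" using puv pg by (simp add: mult.assoc)
    also have "\<dots> = u' * g * v'" using u'_def v'_def by (simp add: mult.assoc)
    finally show ?thesis .
  qed
  have min: "\<And>q. q * q = q \<Longrightarrow> q = q * p \<Longrightarrow> q = p * q \<Longrightarrow> q = p"
    using mp unfolding minimal_idempotent_def idempotent_def idem_le_def by blast
  have e1: "v' * u' * g = p"
  proof (rule min)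
    have "v' * u' * g * (v' * u' * g) = v' * (u' * g * v') * u' * g" by (simp add: mult.assoc)
    also have "\<dots> = v' * u' * g" using p3 pu by (simp add: mult.assoc)
    finally show "v' * u' * g * (v' * u' * g) = v' * u' * g" .
    show "v' * u' * g = v' * u' * g * p" using pg by (simp add: mult.assoc)
    show "v' * u' * g = p * (v' * u' * g)" using pu by (metis mult.assoc)
  qed
  have e2: "g * v' * u' = p"
  proof (rule min)
    have "g * v' * u' * (g * v' * u') = g * v' * (u' * g * v') * u'" by (simp add: mult.assoc)
    also have "\<dots> = g * v' * u'" using p3 pu by (simp add: mult.assoc)
    finally show "g * v' * u' * (g * v' * u') = g * v' * u'" .
    show "g * v' * u' = g * v' * u' * p" using pu by (simp add: mult.assoc)
    show "g * v' * u' = p * (g * v' * u')" using pg by (metis mult.assoc)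
  qed
  show ?thesis using e1 e2 g_def by (metis mult.assoc)
qed

theorem corollary2p9:
  fixes K :: "'a::monoid_mult set"
  assumes "\<not> has_zero TYPE('a)"
    and "nearly_simple TYPE('a)"
    and "is_kernel K"
    and "\<exists>p\<in>K. minimal_idempotent p"
  shows "completely_regular TYPE('a)"
proof -
  obtain K' :: "'a set" where K': "is_kernel K'" and inv: "{a. \<not> invertible a} \<subseteq> K'"
    using assms(2) unfolding nearly_simple_def by blast
  have mK: "minimal_ideal K" using assms(3) unfolding is_kernel_def by blast
  have "K' = K" using K' mK unfolding is_kernel_def by blast
  with inv have invK: "\<And>a. \<not> invertible a \<Longrightarrow> a \<in> K" by blast
  obtain p where pK: "p \<in> K" and mp: "minimal_idempotent p" using assms(4) by blast
  have pp: "p * p = p" using mp unfolding minimal_idempotent_def idempotent_def by simp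
  show ?thesis unfolding completely_regular_def
  proof
    fix a :: 'a
    show "\<exists>x. a = a * x * a \<and> a * x = x * a"
    proof (cases "invertible a")
      case True
      then obtain b where "a * b = 1" "b * a = 1" unfolding invertible_def by blast
      thus ?thesis by (metis mult_1_left mult_1_right mult.assoc)
    next
      case False
      hence aK: "a \<in> K" using invK by blast
      obtain s t where a: "a = s * p * t" using ideal_gen[OF mK pK aK] by blast
      obtain c where c: "c * (p * t * s * p) = p" "(p * t * s * p) * c = p"
        using group_inv[OF mK pK mp, of "t * s"] by (auto simp: mult.assoc)
      define g where "g = p * t * s * p"
      have cg: "c * g = p" "g * c = p" using c g_def by auto
      have pp': "\<And>z. p * (p * z) = p * z" using pp by (metis mult.assoc)
      have gg: "g * g = p * t * a * s * p" using g_def a pp pp' by (simp add: mult.assoc)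
      have pg: "p * g = g" "g * p = g" using pp g_def by (metis mult.assoc)+
      have l: "a = (s * c * c * p * t) * a * a"
      proof -
        have "a = s * (c * g) * t" using a cg by simp
        also have "\<dots> = s * c * (p * g) * t" by (simp add: pg mult.assoc)
        also have "\<dots> = s * c * ((c * g) * g) * t" using cg by simp
        also have "\<dots> = s * c * c * (g * g) * t" by (simp add: mult.assoc)
        also have "\<dots> = (s * c * c * p * t) * a * a" using gg a g_def by (simp add: mult.assoc)
        finally show ?thesis .
      qed
      have r: "a = a * a * (s * p * c * c * t)"
      proof -
        have "a = s * (g * c) * t" using a cg by simp
        also have "\<dots> = s * (g * p) * c * t" by (simp add: pg mult.assoc)
        also have "\<dots> = s * (g * (g * c)) * c * t" using cg by simp
        also have "\<dots> = s * (g * g) * c * c * t" by (simp add: mult.assoc)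
        also have "\<dots> = a * a * (s * p * c * c * t)" using gg a g_def by (simp add: mult.assoc)
        finally show ?thesis .
      qed
      show ?thesis using grp_lemma[OF r l] by blast
    qed
  qed
qed

end
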